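(* Let $\lambda>0$ and let $\lambda_1,\dots,\lambda_M>0$. (i) For each $p\ge 0$, the equation $$t=\sum_{\rho=1}^M\Big(\frac{1}{\lambda_\rho}+\frac{p}{\lambda+t}\Big)^{-1}$$ has a unique solution $t(p)\in(0,\infty)$, and $p\mapsto t(p)$ is differentiable. (ii) With $\gamma(p)=\sum_\rho\big(\frac{1}{\lambda_\rho}+\frac{p}{\lambda+t(p)}\big)^{-2}$, one has $(\lambda+t(p))^2>p\,\gamma(p)$ and $$t'(p)=-\frac{(\lambda+t)\,\gamma}{(\lambda+t)^2-p\gamma}<0.$$ (iii) Let $c_\rho>0$ and define $$E_\rho(p)=\frac{c_\rho}{\lambda_\rho}\Big(\frac{1}{\lambda_\rho}+\frac{p}{\lambda+t(p)}\Big)^{-2}\Big(1-\frac{p\gamma(p)}{(\lambda+t(p))^2}\Big)^{-1}.$$ If $\lambda_\gamma>\lambda_\rho$, then for all $p>0$, $$\frac{d}{dp}\log E_\rho(p)>\frac{d}{dp}\log E_\gamma(p).$$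
   Context: This concerns the theoretical mode-error learning curves of kernel ridge regression with ridge parameter $\lambda$ and kernel eigenvalues $\lambda_\rho$. In the application, $c_\rho=\langle\overline{w}_\rho^2\rangle$ is the second moment of the target's $\rho$-th feature coefficient. The index $\gamma$ in part (iii) is a mode label and should not be confused with the function $\gamma(p)$. *)

theory Defs
  imports "HOL-Analysis.Analysis"
begin

definition rhs :: "(nat \<Rightarrow> real) \<Rightarrow> nat \<Rightarrow> real \<Rightarrow> real \<Rightarrow> real \<Rightarrow> real" where
  "rhs ls M lam p t = (\<Sum>\<rho>=1..M. inverse (1 / ls \<rho> + p / (lam + t)))"

definition tsol :: "(nat \<Rightarrow> real) \<Rightarrow> nat \<Rightarrow> real \<Rightarrow> real \<Rightarrow> real" where
  "tsol ls M lam p = (THE t. t > 0 \<and> t = rhs ls M lam p t)"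

definition gam :: "(nat \<Rightarrow> real) \<Rightarrow> nat \<Rightarrow> real \<Rightarrow> real \<Rightarrow> real" where
  "gam ls M lam p = (\<Sum>\<rho>=1..M. (inverse (1 / ls \<rho> + p / (lam + tsol ls M lam p))) ^ 2)"

definition Emode :: "(nat \<Rightarrow> real) \<Rightarrow> nat \<Rightarrow> real \<Rightarrow> (nat \<Rightarrow> real) \<Rightarrow> nat \<Rightarrow> real \<Rightarrow> real" where
  "Emode ls M lam c \<rho> p =
     c \<rho> / ls \<rho> * (inverse (1 / ls \<rho> + p / (lam + tsol ls M lam p))) ^ 2
       * inverse (1 - p * gam ls M lam p / (lam + tsol ls M lam p) ^ 2)"

end

theory Submission imports Defs begin

context
  fixes ls :: "nat \<Rightarrow> real" and M :: nat and lam :: real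
  assumes M1: "M \<ge> 1" and lam: "lam > 0" and lpos: "\<forall>\<rho>\<in>{1..M}. ls \<rho> > 0"
begin

lemma a_pos: "p \<ge> 0 \<Longrightarrow> t \<ge> 0 \<Longrightarrow> \<rho>\<in>{1..M} \<Longrightarrow> 1/ls \<rho> + p/(lam+t) > 0"
  using lpos lam by (smt (verit) divide_nonneg_nonneg zero_less_divide_1_iff)

lemma w_pos: "p \<ge> 0 \<Longrightarrow> t \<ge> 0 \<Longrightarrow> \<rho>\<in>{1..M} \<Longrightarrow> inverse (1/ls \<rho> + p/(lam+t)) > 0"
  using a_pos by simp

lemma w_le: "p \<ge> 0 \<Longrightarrow> t \<ge> 0 \<Longrightarrow> \<rho>\<in>{1..M} \<Longrightarrow> inverse (1/ls \<rho> + p/(lam+t)) \<le> ls \<rho>"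
proof -
  assume h: "p \<ge> 0" "t \<ge> 0" "\<rho>\<in>{1..M}"
  have "1/ls \<rho> \<le> 1/ls \<rho> + p/(lam+t)" using h lam by simp
  moreover have "1/ls \<rho> > 0" using lpos h by simp
  ultimately have "inverse (1/ls \<rho> + p/(lam+t)) \<le> inverse (1/ls \<rho>)"
    by (rule le_imp_inverse_le)
  thus ?thesis using \<open>1/ls \<rho> > 0\<close> by (simp add: inverse_eq_divide)
qed

lemma pw_le: "p \<ge> 0 \<Longrightarrow> t \<ge> 0 \<Longrightarrow> \<rho>\<in>{1..M} \<Longrightarrow> p * inverse (1/ls \<rho> + p/(lam+t)) \<le> lam + t"
proof -
  assume h: "p \<ge> 0" "t \<ge> 0" "\<rho>\<in>{1..M}"
  have a: "1/ls \<rho> + p/(lam+t) > 0" using a_pos h by blast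
  have "p \<le> (lam+t) * (1/ls \<rho> + p/(lam+t))"
    using h lam lpos by (simp add: distrib_left)
      (metis atLeastAtMost_iff divide_nonneg_pos less_imp_le add_nonneg_nonneg)
  thus ?thesis using a by (simp add: divide_simps mult.commute)
qed

lemma core:
  assumes p: "p \<ge> 0" and q: "q \<ge> 0" and t: "t \<ge> 0" and s: "s \<ge> 0"
    and et: "t = rhs ls M lam p t" and es: "s = rhs ls M lam q s"
  defines "P \<equiv> (\<Sum>\<rho>=1..M. inverse (1/ls \<rho> + p/(lam+t)) * inverse (1/ls \<rho> + q/(lam+s)))"
  shows "(t - s) * ((lam+t)*(lam+s) - p*P) = (q-p)*(lam+t)*P"
    and "(lam+t)*(lam+s) - p*P \<ge> lam*(lam+t)"
    and "0 \<le> P" and "P \<le> (\<Sum>\<rho>=1..M. ls \<rho>^2)"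
proof -
  have trm: "inverse (1/ls \<rho> + p/(lam+t)) - inverse (1/ls \<rho> + q/(lam+s))
     = inverse (1/ls \<rho> + p/(lam+t)) * inverse (1/ls \<rho> + q/(lam+s)) * (q/(lam+s) - p/(lam+t))"
    if "\<rho>\<in>{1..M}" for \<rho>
  proof -
    have "1/ls \<rho> + p/(lam+t) > 0" "1/ls \<rho> + q/(lam+s) > 0" using a_pos that p q t s by auto
    hence "inverse (1/ls \<rho> + p/(lam+t)) - inverse (1/ls \<rho> + q/(lam+s))
      = inverse (1/ls \<rho> + p/(lam+t)) * inverse (1/ls \<rho> + q/(lam+s)) * ((1/ls \<rho> + q/(lam+s)) - (1/ls \<rho> + p/(lam+t)))"
      by (simp add: inverse_diff_inverse algebra_simps)
    thus ?thesis by simp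
  qed
  have "t - s = (\<Sum>\<rho>=1..M. inverse (1/ls \<rho> + p/(lam+t)) - inverse (1/ls \<rho> + q/(lam+s)))"
    using et es by (metis rhs_def sum_subtractf)
  also have "\<dots> = (q/(lam+s) - p/(lam+t)) * P"
    unfolding P_def sum_distrib_left by (intro sum.cong) (auto simp: trm mult_ac)
  finally have ts: "t - s = (q/(lam+s) - p/(lam+t)) * P" .
  have fe: "(q/(lam+s) - p/(lam+t))*((lam+t)*(lam+s)) = q*(lam+t) - p*(lam+s)"
  proof -
    have "lam+s \<noteq> 0" "lam+t \<noteq> 0" using lam t s by auto
    hence "q/(lam+s)*((lam+t)*(lam+s)) = q*(lam+t)" "p/(lam+t)*((lam+t)*(lam+s)) = p*(lam+s)"
      by simp_all
    thus ?thesis by (simp add: left_diff_distrib)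
  qed
  have "(t-s)*((lam+t)*(lam+s)) = (q*(lam+t) - p*(lam+s)) * P"
    unfolding ts using fe by (metis mult.assoc mult.commute)
  thus "(t - s) * ((lam+t)*(lam+s) - p*P) = (q-p)*(lam+t)*P"
    by (simp add: algebra_simps)
  have "p*P = (\<Sum>\<rho>=1..M. (p*inverse (1/ls \<rho> + p/(lam+t))) * inverse (1/ls \<rho> + q/(lam+s)))"
    unfolding P_def sum_distrib_left by (simp add: mult.assoc)
  also have "\<dots> \<le> (\<Sum>\<rho>=1..M. (lam+t) * inverse (1/ls \<rho> + q/(lam+s)))"
    apply (rule sum_mono) apply (rule mult_right_mono)
    using pw_le p t w_pos q s by (auto intro: less_imp_le)
  also have "\<dots> = (lam+t) * s" using es unfolding rhs_def by (metis sum_distrib_left)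
  finally show "(lam+t)*(lam+s) - p*P \<ge> lam*(lam+t)" by (simp add: algebra_simps)
  show "0 \<le> P" unfolding P_def using less_imp_le[OF w_pos] p q t s
    by (auto intro!: sum_nonneg)
  show "P \<le> (\<Sum>\<rho>=1..M. ls \<rho>^2)" unfolding P_def power2_eq_square
    apply (rule sum_mono) apply (rule mult_mono)
    using w_le w_pos p q t s lpos by (auto intro: less_imp_le)
qed

lemma rhs_pos: "p \<ge> 0 \<Longrightarrow> t \<ge> 0 \<Longrightarrow> rhs ls M lam p t > 0"
  unfolding rhs_def using w_pos M1 by (intro sum_pos) auto

lemma rhs_le: "p \<ge> 0 \<Longrightarrow> t \<ge> 0 \<Longrightarrow> rhs ls M lam p t \<le> (\<Sum>\<rho>=1..M. ls \<rho>)"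
  unfolding rhs_def using w_le by (intro sum_mono) auto

lemma exist: assumes p: "p \<ge> 0" shows "\<exists>t>0. t = rhs ls M lam p t"
proof -
  define L where "L = (\<Sum>\<rho>=1..M. ls \<rho>)"
  have L0: "L \<ge> 0" unfolding L_def using lpos by (intro sum_nonneg) (auto intro: less_imp_le)
  have cont: "continuous_on {0..L} (\<lambda>t. t - rhs ls M lam p t)"
    unfolding rhs_def
    apply (intro continuous_intros)
    using lam a_pos[OF p]
    apply auto
    by (metis less_irrefl)
  have "\<exists>x. 0 \<le> x \<and> x \<le> L \<and> x - rhs ls M lam p x = 0"
    apply (rule IVT'[OF _ _ L0 cont])
    using rhs_pos[OF p, of 0] rhs_le[OF p L0] unfolding L_def by auto
  then obtain x where x: "0 \<le> x" "x - rhs ls M lam p x = 0" by blast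
  have "x \<noteq> 0" using x rhs_pos[OF p, of 0] by (smt (verit))
  hence "x > 0" "x = rhs ls M lam p x" using x by linarith+
  thus ?thesis by blast
qed

lemma ex1: assumes p: "p \<ge> 0" shows "\<exists>!t. t > 0 \<and> t = rhs ls M lam p t"
proof (rule ex_ex1I)
  show "\<exists>t. t > 0 \<and> t = rhs ls M lam p t" using exist[OF p] by blast
next
  fix t s assume t: "t > 0 \<and> t = rhs ls M lam p t" and s: "s > 0 \<and> s = rhs ls M lam p s"
  define P where "P = (\<Sum>\<rho>=1..M. inverse (1/ls \<rho> + p/(lam+t)) * inverse (1/ls \<rho> + p/(lam+s)))"
  have "(t - s) * ((lam+t)*(lam+s) - p*P) = (p-p)*(lam+t)*P"
    "(lam+t)*(lam+s) - p*P \<ge> lam*(lam+t)"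
    using core[OF p p less_imp_le[OF conjunct1[OF t]] less_imp_le[OF conjunct1[OF s]] conjunct2[OF t] conjunct2[OF s]] unfolding P_def by auto
  moreover have "lam*(lam+t) > 0" using lam t by auto
  ultimately show "t = s" by auto
qed

lemma tsol: "p \<ge> 0 \<Longrightarrow> tsol ls M lam p > 0 \<and> tsol ls M lam p = rhs ls M lam p (tsol ls M lam p)"
  unfolding tsol_def by (rule theI'[OF ex1])

lemma lip: assumes p: "p \<ge> 0" and q: "q \<ge> 0"
  shows "\<bar>tsol ls M lam q - tsol ls M lam p\<bar> \<le> \<bar>q - p\<bar> * ((\<Sum>\<rho>=1..M. ls \<rho>^2) / lam)"
proof -
  define t where "t = tsol ls M lam p"
  define s where "s = tsol ls M lam q"
  define P where "P = (\<Sum>\<rho>=1..M. inverse (1/ls \<rho> + p/(lam+t)) * inverse (1/ls \<rho> + q/(lam+s)))"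
  define C where "C = (\<Sum>\<rho>=1..M. ls \<rho>^2)"
  define X where "X = (lam+t)*(lam+s) - p*P"
  have t: "t > 0" "t = rhs ls M lam p t" using tsol[OF p] unfolding t_def by blast+
  have s: "s > 0" "s = rhs ls M lam q s" using tsol[OF q] unfolding s_def by blast+
  have c: "(t - s) * X = (q-p)*(lam+t)*P" "X \<ge> lam*(lam+t)" "0 \<le> P" "P \<le> C"
    using core[OF p q less_imp_le[OF t(1)] less_imp_le[OF s(1)] t(2) s(2)] unfolding P_def X_def C_def by auto
  have u: "lam + t > 0" using lam t by auto
  have X0: "X \<ge> 0" using c(2) u lam by (smt (verit) mult_pos_pos)
  have e: "\<bar>t - s\<bar> * X = \<bar>q - p\<bar> * (lam+t) * P"
  proof -
    have "\<bar>(t - s) * X\<bar> = \<bar>(q-p)*(lam+t)*P\<bar>" using c(1) by simp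
    thus ?thesis using X0 u c(3) by (simp add: abs_mult)
  qed
  have "\<bar>t - s\<bar> * (lam*(lam+t)) \<le> \<bar>t - s\<bar> * X" using c(2) by (intro mult_left_mono) auto
  also have "\<dots> = \<bar>q - p\<bar> * (lam+t) * P" by (rule e)
  also have "\<dots> \<le> \<bar>q - p\<bar> * (lam+t) * C" using c(4) u by (intro mult_left_mono) auto
  finally have f: "\<bar>t - s\<bar> * (lam*(lam+t)) \<le> \<bar>q - p\<bar> * (lam+t) * C" .
  have "(\<bar>t - s\<bar> * lam) * (lam+t) \<le> (\<bar>q - p\<bar> * C) * (lam+t)"
    using f by (metis mult.assoc mult.commute)
  hence "\<bar>t - s\<bar> * lam \<le> \<bar>q - p\<bar> * C" using u by (rule mult_right_le_imp_le)
  hence "\<bar>t - s\<bar> \<le> \<bar>q - p\<bar> * C / lam" using lam by (simp add: pos_le_divide_eq)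
  thus ?thesis unfolding t_def s_def C_def by (simp add: abs_minus_commute)
qed

lemma tsol_tendsto: assumes p: "p \<ge> 0"
  shows "(tsol ls M lam \<longlongrightarrow> tsol ls M lam p) (at p within {0..})"
proof -
  define C where "C = (\<Sum>\<rho>=1..M. ls \<rho>^2) / lam"
  have ev: "\<forall>\<^sub>F x in at p within {0..}. norm (tsol ls M lam x - tsol ls M lam p) \<le> \<bar>x - p\<bar> * C"
    unfolding eventually_at_filter C_def using lip[OF p] by (auto intro!: always_eventually)
  have "((\<lambda>x. \<bar>x - p\<bar> * C) \<longlongrightarrow> \<bar>p - p\<bar> * C) (at p within {0..})"
    by (intro tendsto_intros)
  hence "((\<lambda>x. \<bar>x - p\<bar> * C) \<longlongrightarrow> 0) (at p within {0..})" by simp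
  from Lim_null_comparison[OF ev this] show ?thesis by (simp add: LIM_zero_iff)
qed


lemma tsol_deriv: assumes p: "p \<ge> 0"
  shows "(tsol ls M lam has_real_derivative
           (- (lam + tsol ls M lam p) * gam ls M lam p
              / ((lam + tsol ls M lam p)^2 - p * gam ls M lam p))) (at p within {0..})"
    and "(lam + tsol ls M lam p)^2 - p * gam ls M lam p \<ge> lam * (lam + tsol ls M lam p)"
    and "gam ls M lam p > 0"
proof -
  define t where "t = tsol ls M lam p"
  define u where "u = lam + t"
  define W where "W = (\<lambda>\<rho> y. inverse (1/ls \<rho> + y/(lam + tsol ls M lam y)))"
  define P where "P = (\<lambda>y. \<Sum>\<rho>=1..M. W \<rho> p * W \<rho> y)"
  define X where "X = (\<lambda>y. u * (lam + tsol ls M lam y) - p * P y)"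
  have t: "t > 0" "t = rhs ls M lam p t" using tsol[OF p] unfolding t_def by blast+
  have u: "u > 0" using t lam unfolding u_def by auto
  have cy: "(t - tsol ls M lam y) * X y = (y - p) * u * P y \<and> X y \<ge> lam * u" if y: "y \<ge> 0" for y
  proof -
    have s: "tsol ls M lam y > 0" "tsol ls M lam y = rhs ls M lam y (tsol ls M lam y)"
      using tsol[OF y] by blast+
    show ?thesis using core[OF p y less_imp_le[OF t(1)] less_imp_le[OF s(1)] t(2) s(2)]
      unfolding X_def P_def W_def u_def t_def by auto
  qed
  have gP: "gam ls M lam p = P p" unfolding gam_def P_def W_def t_def power2_eq_square ..
  have Xp: "X p = u^2 - p * gam ls M lam p" unfolding X_def gP u_def t_def power2_eq_square ..
  show "(lam + tsol ls M lam p)^2 - p * gam ls M lam p \<ge> lam * (lam + tsol ls M lam p)"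
    using cy[OF p] Xp unfolding u_def t_def by simp
  have Xpos: "X p > 0" using cy[OF p] u lam by (smt (verit) mult_pos_pos)
  show "gam ls M lam p > 0" unfolding gam_def using w_pos p less_imp_le[OF t(1)] M1
    unfolding t_def by (intro sum_pos) (auto, metis less_irrefl)
  have Wt: "((\<lambda>y. W \<rho> y) \<longlongrightarrow> W \<rho> p) (at p within {0..})" if r: "\<rho>\<in>{1..M}" for \<rho>
    unfolding W_def
  proof (intro tendsto_intros tsol_tendsto[OF p])
    show "lam + tsol ls M lam p \<noteq> 0" using u unfolding u_def t_def by simp
    show "1 / ls \<rho> + p / (lam + tsol ls M lam p) \<noteq> 0"
      using a_pos[OF p less_imp_le[OF t(1)] r] unfolding t_def by simp
  qed
  have Pt: "(P \<longlongrightarrow> P p) (at p within {0..})"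
    unfolding P_def by (intro tendsto_intros Wt) auto
  have Xt: "(X \<longlongrightarrow> X p) (at p within {0..})"
    unfolding X_def by (intro tendsto_intros Pt tsol_tendsto[OF p])
  have L: "((\<lambda>y. - (u * P y) / X y) \<longlongrightarrow> - (u * P p) / X p) (at p within {0..})"
    by (intro tendsto_intros Pt Xt) (use Xpos in simp)
  have ev: "\<forall>\<^sub>F y in at p within {0..}. - (u * P y) / X y = (tsol ls M lam y - tsol ls M lam p) / (y - p)"
    unfolding eventually_at_filter
  proof (intro always_eventually allI impI)
    fix y assume yp: "y \<noteq> p" and y: "y \<in> {0..}"
    have c: "(t - tsol ls M lam y) * X y = (y - p) * u * P y" "X y \<ge> lam * u" using cy y by auto
    have "X y > 0" using c(2) u lam by (smt (verit) mult_pos_pos)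
    moreover have "y - p \<noteq> 0" using yp by simp
    ultimately show "- (u * P y) / X y = (tsol ls M lam y - tsol ls M lam p) / (y - p)"
      using c(1) unfolding t_def by (simp add: field_simps)
  qed
  have "- (u * P p) / X p = - (lam + tsol ls M lam p) * gam ls M lam p
              / ((lam + tsol ls M lam p)^2 - p * gam ls M lam p)"
    unfolding Xp gP u_def t_def by (simp only: mult_minus_left)
  then show "(tsol ls M lam has_real_derivative
           (- (lam + tsol ls M lam p) * gam ls M lam p
              / ((lam + tsol ls M lam p)^2 - p * gam ls M lam p))) (at p within {0..})"
    unfolding has_field_derivative_iff using tendsto_cong[OF ev] L by auto
qed


lemma B_pos: assumes q: "q \<ge> 0"
  shows "1 - q * gam ls M lam q / (lam + tsol ls M lam q)^2 > 0"
proof -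
  have t: "tsol ls M lam q > 0" using tsol[OF q] by blast
  have u: "(lam + tsol ls M lam q)^2 > 0" using t lam by simp
  have "(lam + tsol ls M lam q)^2 - q * gam ls M lam q > 0"
    using tsol_deriv(2)[OF q] lam t by (smt (verit) mult_pos_pos)
  hence "q * gam ls M lam q / (lam + tsol ls M lam q)^2 < 1" using u by (simp add: pos_divide_less_eq)
  thus ?thesis by simp
qed

lemma part3: assumes p: "p > 0" and K: "((\<lambda>q. ln (inverse (1 - q * gam ls M lam q / (lam + tsol ls M lam q)^2))) has_real_derivative K) (at p)"
  and Qd: "((\<lambda>q. q / (lam + tsol ls M lam q)) has_real_derivative Q') (at p)"
  and r: "r \<in> {1..M}" and c: "c r > 0"
  shows "((\<lambda>q. ln (Emode ls M lam c r q)) has_real_derivative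
           (0 - 2 * (1 / (1/ls r + p/(lam + tsol ls M lam p)) * (0 + Q')) + K)) (at p)"
proof -
  define T where "T = tsol ls M lam"
  have pos: "0 < 1/ls r + p/(lam + T p)" using a_pos[of p "T p" r] p r tsol[of p] unfolding T_def by auto
  have l1: "((\<lambda>q. 1/ls r + q/(lam+T q)) has_real_derivative (0 + Q')) (at p)"
    unfolding T_def using DERIV_add[OF DERIV_const Qd, of "1/ls r"] by simp
  have l2: "((\<lambda>q. ln (1/ls r + q/(lam+T q))) has_real_derivative (1 / (1/ls r + p/(lam + T p)) * (0 + Q'))) (at p)"
    by (rule DERIV_chain2[OF _ l1]) (rule DERIV_ln_divide, simp add: pos)
  have l3: "((\<lambda>q. ln (c r / ls r) - 2 * ln (1/ls r + q/(lam+T q)) + ln (inverse (1 - q * gam ls M lam q / (lam + T q)^2)))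
     has_real_derivative (0 - 2 * (1 / (1/ls r + p/(lam + T p)) * (0 + Q')) + K)) (at p)"
    using K unfolding T_def[symmetric]
    by (intro DERIV_add DERIV_diff DERIV_const DERIV_cmult l2) (simp add: T_def)
  show ?thesis unfolding T_def[symmetric]
  proof (rule has_field_derivative_transform_within_open[OF l3, of "{0<..}"])
    fix q :: real assume "q \<in> {0<..}"
    hence q: "q \<ge> 0" by simp
    have a: "0 < 1/ls r + q/(lam + T q)" using a_pos[of q "T q" r] q r tsol[of q] unfolding T_def by auto
    have B: "0 < inverse (1 - q * gam ls M lam q / (lam + T q)^2)" using B_pos[OF q] unfolding T_def by simp
    have cl: "0 < c r / ls r" using c lpos r by simp
    have "ln (Emode ls M lam c r q) = ln (c r / ls r * (inverse (1/ls r + q/(lam+T q)))^2 * inverse (1 - q * gam ls M lam q / (lam + T q)^2))"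
      unfolding Emode_def T_def ..
    also have "\<dots> = ln (c r / ls r) + ln ((inverse (1/ls r + q/(lam+T q)))^2) + ln (inverse (1 - q * gam ls M lam q / (lam + T q)^2))"
    proof -
      have y: "0 < (inverse (1/ls r + q/(lam+T q)))^2" using a by simp
      show ?thesis by (simp only: ln_mult_pos[OF mult_pos_pos[OF cl y] B] ln_mult_pos[OF cl y])
    qed
    also have "ln ((inverse (1/ls r + q/(lam+T q)))^2) = - 2 * ln (1/ls r + q/(lam+T q))"
      using a by (simp add: ln_realpow ln_inverse)
    finally show "ln (c r / ls r) - 2 * ln (1/ls r + q/(lam+T q)) + ln (inverse (1 - q * gam ls M lam q / (lam + T q)^2))
        = ln (Emode ls M lam c r q)" by simp
  qed (use p in auto)
qed


lemma Kex: assumes p: "p > 0" and Tder: "(tsol ls M lam has_real_derivative D0) (at p)"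
  shows "\<exists>K. ((\<lambda>q. ln (inverse (1 - q * gam ls M lam q / (lam + tsol ls M lam q)^2))) has_real_derivative K) (at p)"
proof -
  have p0: "p \<ge> 0" using p by simp
  have t: "tsol ls M lam p > 0" using tsol[OF p0] by blast
  have u: "lam + tsol ls M lam p > 0" using t lam by simp
  have a: "1 / ls n + p / (lam + tsol ls M lam p) \<noteq> 0" if "Suc 0 \<le> n \<and> n \<le> M" for n
    using a_pos[OF p0 less_imp_le[OF t], of n] that by auto
  have B: "1 - p * gam ls M lam p / (lam + tsol ls M lam p)^2 > 0" by (rule B_pos[OF p0])
  have X: "(lam + tsol ls M lam p)^2 - p * gam ls M lam p > 0"
    using tsol_deriv(2)[OF p0] lam t by (smt (verit) mult_pos_pos)
  show ?thesis
    unfolding gam_def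
    apply (rule exI)
    apply (rule DERIV_ln_divide[THEN DERIV_chain2])
    prefer 2
    apply ((rule derivative_intros Tder DERIV_power)+)
    using u a B X unfolding gam_def by (auto intro!: derivative_intros Tder)
qed


lemma part3full: assumes p: "p > 0" and r: "\<rho> \<in> {1..M}" "g \<in> {1..M}"
  and c: "c \<rho> > 0" "c g > 0" and lg: "ls g > ls \<rho>"
  shows "\<exists>D1 D2.
             ((\<lambda>q. ln (Emode ls M lam c \<rho> q)) has_real_derivative D1) (at p)
           \<and> ((\<lambda>q. ln (Emode ls M lam c g q)) has_real_derivative D2) (at p)
           \<and> D1 > D2"
proof -
  define T where "T = tsol ls M lam"
  define D0 where "D0 = - (lam + T p) * gam ls M lam p / ((lam + T p)^2 - p * gam ls M lam p)"
  have p0: "p \<ge> 0" using p by simp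
  have Tder: "(T has_real_derivative D0) (at p)"
    using tsol_deriv(1)[OF p0] at_within_interior[of p "{0..}"] p unfolding T_def D0_def by simp
  have t: "T p > 0" using tsol[OF p0] unfolding T_def by blast
  have u: "lam + T p > 0" using t lam by simp
  have g0: "gam ls M lam p > 0" by (rule tsol_deriv(3)[OF p0])
  have X: "(lam + T p)^2 - p * gam ls M lam p > 0"
    using tsol_deriv(2)[OF p0] lam t unfolding T_def by (smt (verit) mult_pos_pos)
  have n: "- (lam + T p) * gam ls M lam p < 0" by (rule mult_neg_pos) (use u g0 in auto)
  have D0neg: "D0 < 0" unfolding D0_def using divide_neg_pos[OF n X] .
  define Q' where "Q' = (1 * (lam + T p) - p * (0 + D0)) / ((lam + T p) * (lam + T p))"
  have Qd: "((\<lambda>q. q / (lam + T q)) has_real_derivative Q') (at p)"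
    unfolding Q'_def
    by (rule DERIV_divide[OF DERIV_ident DERIV_add[OF DERIV_const Tder]]) (use u in simp)
  have "p * D0 < 0" using p D0neg by (simp add: mult_pos_neg)
  hence Qpos: "Q' > 0" unfolding Q'_def using u by (intro divide_pos_pos) auto
  obtain K where K: "((\<lambda>q. ln (inverse (1 - q * gam ls M lam q / (lam + T q)^2))) has_real_derivative K) (at p)"
    using Kex[OF p Tder[unfolded T_def]] unfolding T_def by blast
  note d1 = part3[where c=c and r=\<rho>, OF p K[unfolded T_def] Qd[unfolded T_def] r(1) c(1)]
  note d2 = part3[where c=c and r=g, OF p K[unfolded T_def] Qd[unfolded T_def] r(2) c(2)]
  have ar: "0 < 1/ls \<rho> + p/(lam + T p)" using a_pos[OF p0 less_imp_le[OF t] r(1)] .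
  have ag: "0 < 1/ls g + p/(lam + T p)" using a_pos[OF p0 less_imp_le[OF t] r(2)] .
  have lr: "ls \<rho> > 0" using lpos r by auto
  have "1/ls g < 1/ls \<rho>" using lg lr by (simp add: frac_less2)
  hence "1/ls g + p/(lam + T p) < 1/ls \<rho> + p/(lam + T p)" by simp
  hence "1 / (1/ls \<rho> + p/(lam + T p)) < 1 / (1/ls g + p/(lam + T p))"
    by (intro divide_strict_left_mono) (use ag ar in auto)
  hence "1 / (1/ls \<rho> + p/(lam + T p)) * (0 + Q') < 1 / (1/ls g + p/(lam + T p)) * (0 + Q')"
    using Qpos by (intro mult_strict_right_mono) auto
  hence "0 - 2 * (1 / (1/ls \<rho> + p/(lam + T p)) * (0 + Q')) + K > 0 - 2 * (1 / (1/ls g + p/(lam + T p)) * (0 + Q')) + K"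
    by simp
  with d1 d2 show ?thesis unfolding T_def by blast
qed

end

theorem mainTheorem4:
  fixes ls c :: "nat \<Rightarrow> real" and M :: nat and lam :: real
  assumes "M \<ge> 1"
    and "lam > 0"
    and "\<forall>\<rho>\<in>{1..M}. ls \<rho> > 0"
  shows
    "(\<forall>p\<ge>0. (\<exists>!t. t > 0 \<and> t = rhs ls M lam p t)
             \<and> tsol ls M lam differentiable (at p within {0..}))
   \<and> (\<forall>p\<ge>0. (lam + tsol ls M lam p) ^ 2 > p * gam ls M lam p
             \<and> (tsol ls M lam has_real_derivative
                  (- (lam + tsol ls M lam p) * gam ls M lam p
                     / ((lam + tsol ls M lam p) ^ 2 - p * gam ls M lam p))) (at p within {0..})
             \<and> - (lam + tsol ls M lam p) * gam ls M lam p
                     / ((lam + tsol ls M lam p) ^ 2 - p * gam ls M lam p) < 0)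
   \<and> (\<forall>\<rho>\<in>{1..M}. \<forall>g\<in>{1..M}.
         c \<rho> > 0 \<longrightarrow> c g > 0 \<longrightarrow> ls g > ls \<rho> \<longrightarrow>
         (\<forall>p>0. \<exists>D1 D2.
             ((\<lambda>q. ln (Emode ls M lam c \<rho> q)) has_real_derivative D1) (at p)
           \<and> ((\<lambda>q. ln (Emode ls M lam c g q)) has_real_derivative D2) (at p)
           \<and> D1 > D2))"
proof (intro conjI allI impI ballI)
  fix p :: real assume p: "p \<ge> 0"
  show "\<exists>!t. t > 0 \<and> t = rhs ls M lam p t" by (rule ex1[OF assms p])
  note d = tsol_deriv[OF assms p]
  show "tsol ls M lam differentiable (at p within {0..})"
    using d(1) real_differentiable_def by blast
  have t: "tsol ls M lam p > 0" using tsol[OF assms p] by blast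
  have X: "(lam + tsol ls M lam p)^2 - p * gam ls M lam p > 0"
    using d(2) assms(2) t by (smt (verit) mult_pos_pos)
  thus "(lam + tsol ls M lam p) ^ 2 > p * gam ls M lam p" by simp
  show "(tsol ls M lam has_real_derivative
                  (- (lam + tsol ls M lam p) * gam ls M lam p
                     / ((lam + tsol ls M lam p) ^ 2 - p * gam ls M lam p))) (at p within {0..})"
    by (rule d(1))
  show "- (lam + tsol ls M lam p) * gam ls M lam p
                     / ((lam + tsol ls M lam p) ^ 2 - p * gam ls M lam p) < 0"
  proof -
    have n: "- (lam + tsol ls M lam p) * gam ls M lam p < 0"
      by (rule mult_neg_pos) (use d(3) t assms(2) in auto)
    show ?thesis using divide_neg_pos[OF n X] .
  qed
next
  fix \<rho> g p :: "_" assume "\<rho> \<in> {1..M}" "g \<in> {1..M}" "c \<rho> > 0" "c g > 0" "ls g > ls \<rho>" "(p::real) > 0"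
  thus "\<exists>D1 D2.
             ((\<lambda>q. ln (Emode ls M lam c \<rho> q)) has_real_derivative D1) (at p)
           \<and> ((\<lambda>q. ln (Emode ls M lam c g q)) has_real_derivative D2) (at p)
           \<and> D1 > D2" using part3full[OF assms] by blast
qed

end
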